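(* Let $(\mathcal A,\mathcal T,(-))$ be a meta-tangible $\mathcal T$-group module triple, with identity $\mathbb 1$, and put $e=\mathbb 1(-)\mathbb 1$, $e'=e+\mathbb 1$. Then one of the following holds: (i) $(\mathcal A,\mathcal T,(-))$ is $(-)$-bipotent; (ii) $e'=\mathbb 1$, and moreover either (a) $(-)$ is of the first kind and $\mathcal A$ has characteristic $2$ (i.e. $\mathbf 3=\mathbb 1$), in which case $\mathcal A$ has height at most $2$; or (b) $(-)$ is of the second kind, and either $\mathcal A$ has finite (positive) characteristic or the elements $\mathbf m$ and $(-)\mathbf m$, $m\in\mathbb N$, are pairwise distinct.
   Context: $(\mathcal A,+,\mathbb 0)$ commutative monoid, $\mathcal T\subseteq\mathcal A\setminus\{\mathbb 0\}$. A negation map is $(-):\mathcal A\to\mathcal A$ with $(-)(b_1+b_2)=(-)b_1+(-)b_2$, $(-)((-)b)=b$, $(-)\mathbb 0=\mathbb 0$, $(-)\mathcal T\subseteq\mathcal T$. Write $b(-)c:=b+((-)c)$, $b^\circ:=b(-)b$, $\mathcal A^\circ=\{b^\circ:b\in\mathcal A\}$. A $\mathcal T$-triple $(\mathcal A,\mathcal T,(-))$: such data with an action $\mathcal T\times\mathcal A\to\mathcal A$ satisfying $a(b_1+b_2)=ab_1+ab_2$, $a\mathbb 0=\mathbb 0$, $(-)(ab)=((-)a)b=a((-)b)$, with $\mathcal T\cap\mathcal A^\circ=\emptyset$ and every element of $\mathcal A$ a finite sum of elements of $\mathcal T$. It is a $\mathcal T$-group module triple if moreover $\mathcal T$ is a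 group with identity $\mathbb 1$ whose multiplication is the restriction of the action, $\mathbb 1b=b$ and $(a_1a_2)b=a_1(a_2b)$. Meta-tangible: $a+b\in\mathcal T$ for all $a,b\in\mathcal T$ with $b\neq(-)a$. $(-)$-bipotent: $a+b\in\{a,b\}$ for all $a,b\in\mathcal T$ with $b\neq(-)a$. $(-)$ is of the first kind if $(-)a=a$ for all $a\in\mathcal T$, of the second kind if $(-)a\neq a$ for all $a\in\mathcal T$. $\mathbf m:=\mathbb 1+\cdots+\mathbb 1$ ($m$ summands). $\mathcal A$ has characteristic $k\ge1$ if $k$ is minimal with $(k+1)b=b$ for all $b\in\mathcal A$ (here $nb$ is the $n$-fold sum), and characteristic $0$ if no such $k$ exists. Height of $c$: least $t$ with $c=\sum_{i=1}^ta_i$, $a_i\in\mathcal T$; height of $\mathcal A$: supremum over its elements. *)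

theory Defs
  imports "HOL-Algebra.Group"
begin

text \<open>The ambient commutative monoid (A,+,0) is the type 'a :: comm_monoid_add (A = UNIV).
  T :: 'a set is the set of tangible elements, neg the negation map (-),
  act the action T x A -> A (only its values for a \<in> T matter), one the identity of T.\<close>

definition negation_map :: "'a::comm_monoid_add set \<Rightarrow> ('a \<Rightarrow> 'a) \<Rightarrow> bool" where
  "negation_map T neg \<longleftrightarrow>
     (\<forall>b1 b2. neg (b1 + b2) = neg b1 + neg b2) \<and>
     (\<forall>b. neg (neg b) = b) \<and> neg 0 = 0 \<and> neg ` T \<subseteq> T"

definition circ :: "('a::comm_monoid_add \<Rightarrow> 'a) \<Rightarrow> 'a \<Rightarrow> 'a" where
  "circ neg b = b + neg b"

definition T_triple :: "'a::comm_monoid_add set \<Rightarrow> ('a \<Rightarrow> 'a) \<Rightarrow> ('a \<Rightarrow> 'a \<Rightarrow> 'a) \<Rightarrow> bool" where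
  "T_triple T neg act \<longleftrightarrow>
     T \<subseteq> UNIV - {0} \<and> negation_map T neg \<and>
     (\<forall>a\<in>T. \<forall>b1 b2. act a (b1 + b2) = act a b1 + act a b2) \<and>
     (\<forall>a\<in>T. act a 0 = 0) \<and>
     (\<forall>a\<in>T. \<forall>b. neg (act a b) = act (neg a) b \<and> neg (act a b) = act a (neg b)) \<and>
     T \<inter> range (circ neg) = {} \<and>
     (\<forall>b. \<exists>xs. set xs \<subseteq> T \<and> b = sum_list xs)"

definition T_group_module_triple ::
  "'a::comm_monoid_add set \<Rightarrow> ('a \<Rightarrow> 'a) \<Rightarrow> ('a \<Rightarrow> 'a \<Rightarrow> 'a) \<Rightarrow> 'a \<Rightarrow> bool" where
  "T_group_module_triple T neg act u \<longleftrightarrow>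
     T_triple T neg act \<and>
     group \<lparr>carrier = T, mult = act, one = u\<rparr> \<and>
     (\<forall>b. act u b = b) \<and>
     (\<forall>a1\<in>T. \<forall>a2\<in>T. \<forall>b. act (act a1 a2) b = act a1 (act a2 b))"

definition meta_tangible :: "'a::comm_monoid_add set \<Rightarrow> ('a \<Rightarrow> 'a) \<Rightarrow> bool" where
  "meta_tangible T neg \<longleftrightarrow> (\<forall>a\<in>T. \<forall>b\<in>T. b \<noteq> neg a \<longrightarrow> a + b \<in> T)"

definition neg_bipotent :: "'a::comm_monoid_add set \<Rightarrow> ('a \<Rightarrow> 'a) \<Rightarrow> bool" where
  "neg_bipotent T neg \<longleftrightarrow> (\<forall>a\<in>T. \<forall>b\<in>T. b \<noteq> neg a \<longrightarrow> a + b \<in> {a, b})"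

definition first_kind :: "'a set \<Rightarrow> ('a \<Rightarrow> 'a) \<Rightarrow> bool" where
  "first_kind T neg \<longleftrightarrow> (\<forall>a\<in>T. neg a = a)"

definition second_kind :: "'a set \<Rightarrow> ('a \<Rightarrow> 'a) \<Rightarrow> bool" where
  "second_kind T neg \<longleftrightarrow> (\<forall>a\<in>T. neg a \<noteq> a)"

text \<open>n-fold sum n b = b + ... + b (n summands); the element m of the paper is nsum m one.\<close>
definition nsum :: "nat \<Rightarrow> 'a::comm_monoid_add \<Rightarrow> 'a" where
  "nsum n b = sum_list (replicate n b)"

definition has_characteristic :: "'a::comm_monoid_add itself \<Rightarrow> nat \<Rightarrow> bool" where
  "has_characteristic _ k \<longleftrightarrow>
     (if k = 0 then (\<forall>j\<ge>1. \<not> (\<forall>b::'a. nsum (j + 1) b = b))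
      else (\<forall>b::'a. nsum (k + 1) b = b) \<and> (\<forall>j. 1 \<le> j \<and> j < k \<longrightarrow> \<not> (\<forall>b::'a. nsum (j + 1) b = b)))"

definition elt_height :: "'a::comm_monoid_add set \<Rightarrow> 'a \<Rightarrow> nat" where
  "elt_height T c = (LEAST t. \<exists>xs. length xs = t \<and> set xs \<subseteq> T \<and> sum_list xs = c)"

end

theory Submission
  imports Defs
begin

lemma nsum_0[simp]: "nsum 0 b = 0" by (simp add: nsum_def)
lemma nsum_zero[simp]: "nsum n (0::'a::comm_monoid_add) = 0"
  by (induction n) (simp_all add: nsum_def)
lemma nsum_Suc: "nsum (Suc n) b = b + nsum n b" by (simp add: nsum_def)
lemma nsum_add: "nsum (m + n) b = nsum m b + nsum n b"
  by (simp add: nsum_def replicate_add)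
lemma nsum_distrib: "nsum n ((x::'a::comm_monoid_add) + y) = nsum n x + nsum n y"
  by (induction n) (simp_all add: nsum_Suc add_ac)
lemma nsum_sum_list: "nsum n (sum_list xs) = sum_list (map (nsum n) xs)"
  by (induction xs) (simp_all add: nsum_distrib)

lemma act_nsum:
  assumes "\<And>b1 b2. act a (b1 + b2) = act a b1 + act a b2" "act a 0 = 0"
  shows "act a (nsum n x) = nsum n (act a x)"
  by (induction n) (simp_all add: nsum_Suc assms)

lemma neg_nsum:
  assumes "\<And>b1 b2. neg (b1 + b2) = neg b1 + neg b2" "neg 0 = 0"
  shows "neg (nsum n x) = nsum n (neg x)"
  by (induction n) (simp_all add: nsum_Suc assms)

lemma char_exists:
  assumes "k \<ge> 1" "\<forall>b::'a::comm_monoid_add. nsum (k+1) b = b"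
  shows "\<exists>k\<ge>1. has_characteristic TYPE('a) k"
proof -
  let ?P = "\<lambda>j. j \<ge> 1 \<and> (\<forall>b::'a. nsum (j+1) b = b)"
  define k' where "k' = (LEAST j. ?P j)"
  have P: "?P k'" unfolding k'_def by (rule LeastI[of ?P k]) (use assms in auto)
  have "\<forall>j. 1 \<le> j \<and> j < k' \<longrightarrow> \<not> (\<forall>b::'a. nsum (j + 1) b = b)"
    using not_less_Least[of _ ?P] unfolding k'_def by blast
  with P have "has_characteristic TYPE('a) k'" unfolding has_characteristic_def by auto
  with P show ?thesis by blast
qed

theorem theorem7p21:
  fixes T :: "'a::comm_monoid_add set" and neg :: "'a \<Rightarrow> 'a"
    and act :: "'a \<Rightarrow> 'a \<Rightarrow> 'a" and one :: 'a
  assumes "T_group_module_triple T neg act one"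
    and "meta_tangible T neg"
  defines "e \<equiv> one + neg one"
  defines "e' \<equiv> e + one"
  shows "neg_bipotent T neg \<or>
    (e' = one \<and>
      ((first_kind T neg \<and> has_characteristic TYPE('a) 2 \<and> (\<forall>c. elt_height T c \<le> 2)) \<or>
       (second_kind T neg \<and>
         ((\<exists>k\<ge>1. has_characteristic TYPE('a) k) \<or>
          ((\<forall>m\<ge>1. \<forall>n\<ge>1. m \<noteq> n \<longrightarrow> nsum m one \<noteq> nsum n one \<and> neg (nsum m one) \<noteq> neg (nsum n one)) \<and>
           (\<forall>m\<ge>1. \<forall>n\<ge>1. nsum m one \<noteq> neg (nsum n one)))))))"
proof -
  define G where "G = \<lparr>carrier = T, mult = act, one = one\<rparr>"
  have tr: "T_triple T neg act" and grp: "group G" and actone: "\<And>b. act one b = b"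
    and assoc: "\<And>a1 a2 b. a1 \<in> T \<Longrightarrow> a2 \<in> T \<Longrightarrow> act (act a1 a2) b = act a1 (act a2 b)"
    using assms(1) unfolding T_group_module_triple_def G_def by auto
  have nm: "negation_map T neg" and T0: "T \<subseteq> UNIV - {0}"
    and actadd: "\<And>a b1 b2. a \<in> T \<Longrightarrow> act a (b1 + b2) = act a b1 + act a b2"
    and act0: "\<And>a. a \<in> T \<Longrightarrow> act a 0 = 0"
    and actneg2: "\<And>a b. a \<in> T \<Longrightarrow> neg (act a b) = act a (neg b)"
    and circT0: "T \<inter> range (circ neg) = {}"
    and gen: "\<And>b. \<exists>xs. set xs \<subseteq> T \<and> b = sum_list xs"
    using tr unfolding T_triple_def by blast+
  have negadd: "\<And>b1 b2. neg (b1 + b2) = neg b1 + neg b2"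
    and negneg: "\<And>b. neg (neg b) = b" and neg0: "neg 0 = 0" and negT: "\<And>x. x \<in> T \<Longrightarrow> neg x \<in> T"
    using nm unfolding negation_map_def by blast+
  have circT: "\<And>x. x + neg x \<notin> T"
    using circT0 unfolding circ_def by blast
  have meta: "\<And>x y. x \<in> T \<Longrightarrow> y \<in> T \<Longrightarrow> y \<noteq> neg x \<Longrightarrow> x + y \<in> T"
    using assms(2) unfolding meta_tangible_def by blast
  have neginj: "\<And>x y. neg x = neg y \<Longrightarrow> x = y" using negneg by metis
  have oneT: "one \<in> T" using monoid.one_closed[OF group.is_monoid[OF grp]] by (simp add: G_def)
  have actr1: "\<And>a. a \<in> T \<Longrightarrow> act a one = a"
    using monoid.r_one[OF group.is_monoid[OF grp]] by (simp add: G_def)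
  have negact: "\<And>a. a \<in> T \<Longrightarrow> neg a = act a (neg one)"
    using actneg2 actr1 by metis
  have charT: "\<And>n b. nsum n one = one \<Longrightarrow> nsum n (b::'a) = b"
  proof -
    fix n and b :: 'a assume h: "nsum n one = one"
    obtain xs where xs: "set xs \<subseteq> T" "b = sum_list xs" using gen by blast
    have "\<forall>x\<in>set xs. nsum n x = x"
    proof
      fix x assume "x \<in> set xs"
      hence xT: "x \<in> T" using xs by auto
      have "nsum n x = nsum n (act x one)" using actr1[OF xT] by simp
      also have "\<dots> = act x (nsum n one)"
        by (rule act_nsum[symmetric]) (use xT actadd act0 in auto)
      also have "\<dots> = x" using h actr1[OF xT] by simp
      finally show "nsum n x = x" .
    qed
    hence "map (nsum n) xs = xs" by (induction xs) auto
    thus "nsum n b = b" using xs by (simp add: nsum_sum_list)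
  qed
  show ?thesis
  proof (cases "neg_bipotent T neg")
    case True thus ?thesis by blast
  next
    case False
    then obtain a b where ab: "a \<in> T" "b \<in> T" "b \<noteq> neg a" "a + b \<notin> {a, b}"
      unfolding neg_bipotent_def by blast
    define c where "c = a + b"
    have cT: "c \<in> T" using meta ab unfolding c_def by blast
    have ca: "c \<noteq> a" and cb: "c \<noteq> b" using ab c_def by auto
    have dT: "c + neg a \<in> T" using meta[OF cT negT[OF ab(1)]] ca neginj by metis
    have cc: "c + neg a + neg b = c + neg c" unfolding c_def by (simp add: negadd add_ac)
    have d: "c + neg a = b"
    proof (rule ccontr)
      assume "c + neg a \<noteq> b"
      hence "neg b \<noteq> neg (c + neg a)" using neginj by metis
      hence "c + neg a + neg b \<in> T" using meta[OF dT negT[OF ab(2)]] by blast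
      thus False using cc circT by simp
    qed
    have uT: "c + neg b \<in> T" using meta[OF cT negT[OF ab(2)]] cb neginj by metis
    have u: "c + neg b = a"
    proof (rule ccontr)
      assume "c + neg b \<noteq> a"
      hence "neg a \<noteq> neg (c + neg b)" using neginj by metis
      hence "c + neg b + neg a \<in> T" using meta[OF uT negT[OF ab(1)]] by blast
      moreover have "c + neg b + neg a = c + neg c" unfolding c_def by (simp add: negadd add_ac)
      ultimately show False using circT by simp
    qed
    have aaa: "a + a + neg a = a"
    proof -
      have "a + a + neg a = (c + neg b) + a + neg a" using u by simp
      also have "\<dots> = a + (c + neg a) + neg b" by (simp add: add_ac)
      also have "\<dots> = c + neg b" using d unfolding c_def by (simp add: add_ac)
      also have "\<dots> = a" using u .
      finally show ?thesis .
    qed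
    obtain ai where ai: "ai \<in> T" "act ai a = one"
      using group.l_inv_ex[OF grp, of a] ab(1) by (auto simp: G_def)
    have e'1: "e' = one"
    proof -
      have "act ai (a + a + neg a) = act ai a + act ai a + act ai (neg a)"
        using actadd[OF ai(1)] by simp
      also have "act ai (neg a) = neg one" using actneg2[OF ai(1), of a] ai by simp
      finally show ?thesis using aaa ai unfolding e'_def e_def by (simp add: add_ac)
    qed
    have e'1': "one + one + neg one = one" using e'1 unfolding e'_def e_def by (simp add: add_ac)
    have e1: "e + one = one" using e'1 unfolding e'_def .
    have ee: "e + e = e"
    proof -
      have "e + e = (e + one) + neg one" unfolding e_def by (simp add: add_ac)
      thus ?thesis using e1 unfolding e_def by simp
    qed
    have nsum_e: "\<And>n. n \<ge> 1 \<Longrightarrow> nsum n e = e"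
    proof -
      fix n :: nat assume "n \<ge> 1"
      thus "nsum n e = e"
      proof (induction n rule: dec_induct)
        case base thus ?case by (simp add: nsum_Suc)
      next
        case (step n) thus ?case by (simp add: nsum_Suc ee)
      qed
    qed
    have dec: "\<And>q. q \<ge> 1 \<Longrightarrow> nsum (Suc q) one + neg one = nsum q one"
    proof -
      fix q :: nat assume "q \<ge> 1"
      then obtain r where q: "q = Suc r" by (cases q) auto
      have "nsum (Suc q) one + neg one = nsum r one + (e + one)"
        unfolding q e_def by (simp add: nsum_Suc add_ac)
      thus "nsum (Suc q) one + neg one = nsum q one" using e1 q by (simp add: nsum_Suc add_ac)
    qed
    have down: "\<And>m p. m \<ge> 1 \<Longrightarrow> nsum m one = nsum (m + p) one \<Longrightarrow> one = nsum (p + 1) one"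
    proof -
      fix m p :: nat assume "m \<ge> 1" "nsum m one = nsum (m + p) one"
      thus "one = nsum (p + 1) one"
      proof (induction m rule: dec_induct)
        case base thus ?case by (simp add: nsum_Suc add.commute)
      next
        case (step n)
        have "nsum (Suc n) one + neg one = nsum (Suc n + p) one + neg one" using step by simp
        hence "nsum n one = nsum (n + p) one"
          using dec[of n] dec[of "n + p"] step.hyps by simp
        thus ?case using step by simp
      qed
    qed
    have negone_act: "\<And>x. x \<in> T \<Longrightarrow> neg x = act x (neg one)"
      using actneg2 actr1 by metis
    show ?thesis
    proof (cases "neg one = one")
      case True
      have fk: "first_kind T neg" unfolding first_kind_def
        using negone_act actr1 True by simp
      have three: "nsum 3 one = one" using e1 True unfolding e_def
        by (simp add: numeral_3_eq_3 nsum_Suc add_ac)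
      have ch3: "\<forall>b::'a. nsum 3 b = b" using charT[OF three] by blast
      have "nsum 2 one \<noteq> one"
      proof
        assume "nsum 2 one = one"
        hence "one + neg one \<in> T" using True oneT by (simp add: numeral_2_eq_2 nsum_Suc)
        thus False using circT by blast
      qed
      hence hc: "has_characteristic TYPE('a) 2" using ch3
      proof -
        assume n2: "nsum 2 one \<noteq> one"
        have "\<forall>j. 1 \<le> j \<and> j < 2 \<longrightarrow> \<not> (\<forall>b::'a. nsum (j + 1) b = b)"
        proof (intro allI impI)
          fix j :: nat assume "1 \<le> j \<and> j < 2"
          hence "j = 1" by simp
          thus "\<not> (\<forall>b::'a. nsum (j + 1) b = b)" using n2 by (metis one_add_one)
        qed
        moreover have "\<forall>b::'a. nsum (2 + 1) b = b" using ch3 by simp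
        ultimately show ?thesis unfolding has_characteristic_def by simp
      qed
      have fkT: "\<And>x. x \<in> T \<Longrightarrow> neg x = x" using fk unfolding first_kind_def by blast
      have trip: "\<And>x y z. x \<in> T \<Longrightarrow> y \<in> T \<Longrightarrow> z \<in> T \<Longrightarrow>
          \<exists>ws. set ws \<subseteq> T \<and> length ws \<le> 2 \<and> sum_list ws = x + (y + z)"
      proof -
        fix x y z assume xyz: "x \<in> T" "y \<in> T" "z \<in> T"
        show "\<exists>ws. set ws \<subseteq> T \<and> length ws \<le> 2 \<and> sum_list ws = x + (y + z)"
        proof (cases "x = y")
          case False
          hence "x + y \<in> T" using meta[of x y] xyz fkT by auto
          thus ?thesis using xyz by (intro exI[of _ "[x + y, z]"]) (auto simp: add_ac)
        next
          case xy: True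
          show ?thesis
          proof (cases "y = z")
            case False
            hence "y + z \<in> T" using meta[of y z] xyz fkT by auto
            thus ?thesis using xyz by (intro exI[of _ "[x, y + z]"]) auto
          next
            case True
            have "nsum 3 x = x" using ch3 by blast
            hence "x + (y + z) = x" using xy True by (simp add: numeral_3_eq_3 nsum_Suc)
            thus ?thesis using xyz by (intro exI[of _ "[x]"]) auto
          qed
        qed
      qed
      have red: "\<And>xs. set xs \<subseteq> T \<Longrightarrow> \<exists>ws. set ws \<subseteq> T \<and> length ws \<le> 2 \<and> sum_list ws = sum_list xs"
      proof -
        fix xs show "set xs \<subseteq> T \<Longrightarrow> \<exists>ws. set ws \<subseteq> T \<and> length ws \<le> 2 \<and> sum_list ws = sum_list xs"
        proof (induction xs)
          case Nil thus ?case by (intro exI[of _ "[]"]) auto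
        next
          case (Cons x xs)
          then obtain ws where ws: "set ws \<subseteq> T" "length ws \<le> 2" "sum_list ws = sum_list xs" by auto
          have xT: "x \<in> T" using Cons by auto
          show ?case
          proof (cases ws)
            case Nil thus ?thesis using ws xT by (intro exI[of _ "[x]"]) auto
          next
            case (Cons y ws')
            show ?thesis
            proof (cases ws')
              case Nil thus ?thesis using ws xT Cons by (intro exI[of _ "[x, y]"]) auto
            next
              case (Cons z ws'')
              hence "ws'' = []" using ws \<open>ws = y # ws'\<close> by auto
              hence "ws = [y, z]" using Cons \<open>ws = y # ws'\<close> by simp
              thus ?thesis using trip[OF xT, of y z] ws by auto
            qed
          qed
        qed
      qed
      have "\<forall>c. elt_height T c \<le> 2"
      proof
        fix c
        obtain xs where "set xs \<subseteq> T" "c = sum_list xs" using gen by blast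
        then obtain ws where ws: "set ws \<subseteq> T" "length ws \<le> 2" "sum_list ws = c" using red by blast
        have "elt_height T c \<le> length ws" unfolding elt_height_def
          by (rule Least_le) (use ws in blast)
        thus "elt_height T c \<le> 2" using ws by simp
      qed
      thus ?thesis using fk hc e'1 by blast
    next
      case False
      have sk: "second_kind T neg" unfolding second_kind_def
      proof (intro ballI notI)
        fix x assume xT: "x \<in> T" and "neg x = x"
        hence h: "act x (neg one) = act x one" using negone_act actr1 by simp
        obtain xi where xi: "xi \<in> T" "act xi x = one"
          using group.l_inv_ex[OF grp, of x] xT by (auto simp: G_def)
        have "act xi (act x (neg one)) = act xi (act x one)" using h by simp
        hence "neg one = one" using assoc[OF xi(1) xT] xi actone by simp
        thus False using False by simp
      qed
      have "(\<exists>k\<ge>1. has_characteristic TYPE('a) k) \<or>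
          ((\<forall>m\<ge>1. \<forall>n\<ge>1. m \<noteq> n \<longrightarrow> nsum m one \<noteq> nsum n one \<and> neg (nsum m one) \<noteq> neg (nsum n one)) \<and>
           (\<forall>m\<ge>1. \<forall>n\<ge>1. nsum m one \<noteq> neg (nsum n one)))"
      proof (rule disjCI)
        assume nd: "\<not> ((\<forall>m\<ge>1. \<forall>n\<ge>1. m \<noteq> n \<longrightarrow> nsum m one \<noteq> nsum n one \<and> neg (nsum m one) \<noteq> neg (nsum n one)) \<and>
           (\<forall>m\<ge>1. \<forall>n\<ge>1. nsum m one \<noteq> neg (nsum n one)))"
        have "\<exists>k\<ge>1. nsum (k+1) one = one"
        proof (cases "\<exists>m\<ge>1. \<exists>n\<ge>1. m \<noteq> n \<and> nsum m one = nsum n one")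
          case True
          then obtain m n where mn: "m \<ge> 1" "n \<ge> 1" "m \<noteq> n" "nsum m one = nsum n one" by blast
          show ?thesis
          proof (cases "m < n")
            case True
            define p where "p = n - m"
            have "n = m + p" "p \<ge> 1" using True unfolding p_def by auto
            thus ?thesis using down[of m p] mn by (intro exI[of _ p]) auto
          next
            case False
            define p where "p = m - n"
            have "m = n + p" "p \<ge> 1" using False mn(3) unfolding p_def by auto
            thus ?thesis using down[of n p] mn by (intro exI[of _ p]) auto
          qed
        next
          case False
          with nd neginj obtain m n where mn: "m \<ge> 1" "n \<ge> 1" "nsum m one = neg (nsum n one)" by blast
          have "nsum (m + n) one = nsum n one + nsum n (neg one)"
            using mn neg_nsum[of neg n one] negadd neg0 by (simp add: nsum_add add.commute)
          also have "\<dots> = e" unfolding e_def using nsum_e[OF mn(2)] by (simp add: nsum_distrib e_def)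
          finally have "nsum (m + n + 1) one = one"
            using e1 by (simp add: nsum_add nsum_def add.commute)
          thus ?thesis using mn by (intro exI[of _ "m + n"]) auto
        qed
        then obtain k where "k \<ge> 1" "nsum (k+1) one = one" by blast
        thus "\<exists>k\<ge>1. has_characteristic TYPE('a) k" using char_exists[of k] charT[of "k+1"] by blast
      qed
      thus ?thesis using sk e'1 by blast
    qed
  qed
qed

end
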